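(* Let $n_b\ge 1$, $d_l\ge 4$, $L\ge 5$, $M\ge 1$ be integers, and let $H$ be a quasi-cyclic SC-LDPC parity-check matrix with parameters $(n_b,d_l,L,M)$ and reuse $T=3$ (as defined in the context). Then, for every choice of the shift values $p_{x,y}$ satisfying the reuse-$3$ condition, the Tanner graph of $H$ contains a cycle of length at most $10$; in particular its girth is at most $10$.
   Context: Quasi-cyclic SC-LDPC matrix: fix integers $n_b\ge1$ (bit nodes per protograph; one check node per protograph), $d_l\ge 2$, $L\ge1$, $M\ge1$. $H$ is a binary block matrix with $L+d_l-1$ block rows (indexed $x=1,\dots,L+d_l-1$) and $n_bL$ block columns (indexed $y=1,\dots,n_bL$), each block of size $M\times M$. For a block column $y$ put $t(y)=\lceil y/n_b\rceil$. Block $(x,y)$ is the all-zero matrix unless $t(y)\le x\le t(y)+d_l-1$, in which case it equals the circulant permutation matrix $I_{(p_{x,y})}$ for a shift value $p_{x,y}\in\{0,\dots,M-1\}$; here $I_{(p)}$ is the $M\times M$ matrix whose row $r$ ($0\le r\le M-1$) has a single $1$, in column $(r+p)\bmod M$, and zeros elsewhere. Reuse-$T$ condition (periodic time-variant construction with period $T$): $p_{x+T,\,y+Tn_b}=p_{x,y}$ whenever both $(x,y)$ and $(x+T,y+Tn_b)$ are nonzero blocks of $H$; otherwise the shift values are arbitrary. The Tanner graph of $H$ is the bipartite graph with one bit node per column and one check node per row of $H$, a bit node and check node being adjacent iff the corresponding entry of $H$ is $1$. The girth is the length of a shortest cycle in the Tanner graph. *)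

theory Defs
  imports Main "HOL-Library.Extended_Nat"
begin

text \<open>Block column y (1-indexed) belongs to protograph time t(y) = ceil(y / nb).\<close>
definition tcol :: "nat \<Rightarrow> nat \<Rightarrow> nat" where
  "tcol nb y = (y + nb - 1) div nb"

definition nonzero_block :: "nat \<Rightarrow> nat \<Rightarrow> nat \<Rightarrow> nat \<Rightarrow> nat \<Rightarrow> bool" where
  "nonzero_block nb dl L x y \<longleftrightarrow>
     1 \<le> x \<and> x \<le> L + dl - 1 \<and> 1 \<le> y \<and> y \<le> nb * L \<and>
     tcol nb y \<le> x \<and> x \<le> tcol nb y + dl - 1"

text \<open>Entry of H at row r (0..M-1) of block row x and column c (0..M-1) of block column y.
  The block is I_(p x y): row r has its single 1 in column (r + p) mod M.\<close>
definition H_entry :: "nat \<Rightarrow> nat \<Rightarrow> nat \<Rightarrow> nat \<Rightarrow> (nat \<Rightarrow> nat \<Rightarrow> nat)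
                       \<Rightarrow> nat \<Rightarrow> nat \<Rightarrow> nat \<Rightarrow> nat \<Rightarrow> bool" where
  "H_entry nb dl L M p x r y c \<longleftrightarrow>
     nonzero_block nb dl L x y \<and> r < M \<and> c < M \<and> c = (r + p x y) mod M"

definition valid_shifts :: "nat \<Rightarrow> nat \<Rightarrow> nat \<Rightarrow> nat \<Rightarrow> (nat \<Rightarrow> nat \<Rightarrow> nat) \<Rightarrow> bool" where
  "valid_shifts nb dl L M p \<longleftrightarrow>
     (\<forall>x y. nonzero_block nb dl L x y \<longrightarrow> p x y < M)"

definition reuse_cond :: "nat \<Rightarrow> nat \<Rightarrow> nat \<Rightarrow> nat \<Rightarrow> (nat \<Rightarrow> nat \<Rightarrow> nat) \<Rightarrow> bool" where
  "reuse_cond nb dl L T p \<longleftrightarrow>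
     (\<forall>x y. nonzero_block nb dl L x y \<and> nonzero_block nb dl L (x + T) (y + T * nb)
            \<longrightarrow> p (x + T) (y + T * nb) = p x y)"

text \<open>Tanner graph nodes: bit node (block column y, offset c), check node (block row x, offset r).\<close>
datatype tnode = Bit nat nat | Chk nat nat

fun tanner_adj :: "nat \<Rightarrow> nat \<Rightarrow> nat \<Rightarrow> nat \<Rightarrow> (nat \<Rightarrow> nat \<Rightarrow> nat) \<Rightarrow> tnode \<Rightarrow> tnode \<Rightarrow> bool" where
  "tanner_adj nb dl L M p (Bit y c) (Chk x r) = H_entry nb dl L M p x r y c"
| "tanner_adj nb dl L M p (Chk x r) (Bit y c) = H_entry nb dl L M p x r y c"
| "tanner_adj nb dl L M p _ _ = False"

definition tanner_cycle :: "nat \<Rightarrow> nat \<Rightarrow> nat \<Rightarrow> nat \<Rightarrow> (nat \<Rightarrow> nat \<Rightarrow> nat) \<Rightarrow> nat \<Rightarrow> bool" where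
  "tanner_cycle nb dl L M p k \<longleftrightarrow>
     (\<exists>vs. length vs = k \<and> 3 \<le> k \<and> distinct vs \<and>
        (\<forall>i<k. tanner_adj nb dl L M p (vs ! i) (vs ! ((i + 1) mod k))))"

text \<open>Girth: length of a shortest cycle (infinity if acyclic).\<close>
definition tanner_girth :: "nat \<Rightarrow> nat \<Rightarrow> nat \<Rightarrow> nat \<Rightarrow> (nat \<Rightarrow> nat \<Rightarrow> nat) \<Rightarrow> enat" where
  "tanner_girth nb dl L M p = (INF k \<in> {k. tanner_cycle nb dl L M p k}. enat k)"

end

theory Submission
  imports Defs
begin

definition lab :: "nat \<Rightarrow> int \<Rightarrow> nat" where
  "lab M a = nat (a mod int M)"

lemma lab_add: "M \<ge> 1 \<Longrightarrow> lab M (a + int q) = (lab M a + q) mod M"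
proof -
  assume M: "M \<ge> 1"
  have "int ((lab M a + q) mod M) = (a mod int M + int q) mod int M"
    using M by (simp add: lab_def zmod_int of_nat_add)
  also have "\<dots> = (a + int q) mod int M" by (simp add: mod_add_left_eq)
  finally show ?thesis unfolding lab_def by (metis nat_int)
qed

lemma lab_lt: "M \<ge> 1 \<Longrightarrow> lab M a < M"
  unfolding lab_def by (simp add: nat_less_iff)

lemma adj_fwd:
  assumes "M \<ge> 1" "nonzero_block nb dl L x y" "b = a + int (p x y)"
  shows "tanner_adj nb dl L M p (Chk x (lab M a)) (Bit y (lab M b))"
  using assms by (simp add: H_entry_def lab_add lab_lt)

lemma adj_bwd:
  assumes "M \<ge> 1" "nonzero_block nb dl L x y" "b = a + int (p x y)"
  shows "tanner_adj nb dl L M p (Bit y (lab M b)) (Chk x (lab M a))"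
  using assms by (simp add: H_entry_def lab_add lab_lt)

lemma tcol_eq: "nb \<ge> 1 \<Longrightarrow> tcol nb (k * nb + 1) = k + 1"
proof -
  assume "nb \<ge> 1"
  have "k * nb + 1 + nb - 1 = (k+1) * nb" by simp
  thus ?thesis using \<open>nb \<ge> 1\<close> unfolding tcol_def by simp
qed

lemma lab_eq_iff: "M \<ge> 1 \<Longrightarrow> lab M a = lab M b \<longleftrightarrow> a mod int M = b mod int M"
  unfolding lab_def by (simp add: eq_nat_nat_iff)

theorem lemma3:
  fixes nb dl L M :: nat and p :: "nat \<Rightarrow> nat \<Rightarrow> nat"
  assumes "nb \<ge> 1" and "dl \<ge> 4" and "L \<ge> 5" and "M \<ge> 1"
    and "valid_shifts nb dl L M p"
    and "reuse_cond nb dl L 3 p"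
  shows "(\<exists>k \<le> 10. tanner_cycle nb dl L M p k) \<and> tanner_girth nb dl L M p \<le> 10"
proof -
  note nb = assms(1) and dl = assms(2) and LL = assms(3) and M = assms(4)
  define c1 where "c1 = (1::nat)"
  define c2 where "c2 = nb + 1"
  define c4 where "c4 = 3 * nb + 1"
  define c5 where "c5 = 4 * nb + 1"
  have t1: "tcol nb c1 = 1" using tcol_eq[OF nb, of 0] unfolding c1_def by simp
  have t2: "tcol nb c2 = 2" using tcol_eq[OF nb, of 1] unfolding c2_def by simp
  have t4: "tcol nb c4 = 4" using tcol_eq[OF nb, of 3] unfolding c4_def by simp
  have t5: "tcol nb c5 = 5" using tcol_eq[OF nb, of 4] unfolding c5_def by simp
  have cb: "c1 \<ge> 1" "c2 \<le> nb * L" "c4 \<le> nb * L" "c5 \<le> nb * L" "c1 \<le> nb * L"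
    "c2 \<ge> 1" "c4 \<ge> 1" "c5 \<ge> 1"
  proof -
    have "nb * 5 \<le> nb * L" using LL by simp
    thus "c1 \<ge> 1" "c2 \<le> nb * L" "c4 \<le> nb * L" "c5 \<le> nb * L" "c1 \<le> nb * L"
      "c2 \<ge> 1" "c4 \<ge> 1" "c5 \<ge> 1"
      using nb unfolding c1_def c2_def c4_def c5_def by linarith+
  qed
  have nz21: "nonzero_block nb dl L 2 c1" and nz31: "nonzero_block nb dl L 3 c1"
    and nz32: "nonzero_block nb dl L 3 c2" and nz52: "nonzero_block nb dl L 5 c2"
    and nz22: "nonzero_block nb dl L 2 c2"
    and nz55: "nonzero_block nb dl L 5 c5" and nz65: "nonzero_block nb dl L 6 c5"
    and nz64: "nonzero_block nb dl L 6 c4" and nz54: "nonzero_block nb dl L 5 c4"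
    using t1 t2 t4 t5 cb dl LL unfolding nonzero_block_def by auto
  have sh: "c2 + 3 * nb = c5" "c1 + 3 * nb = c4"
    unfolding c1_def c2_def c4_def c5_def by simp_all
  have RC: "\<And>x y. nonzero_block nb dl L x y \<Longrightarrow> nonzero_block nb dl L (x + 3) (y + 3 * nb)
            \<Longrightarrow> p (x + 3) (y + 3 * nb) = p x y"
    using assms(6) unfolding reuse_cond_def by blast
  have r55: "p 5 c5 = p 2 c2" using RC[OF nz22] nz55 sh by simp
  have r65: "p 6 c5 = p 3 c2" using RC[OF nz32] nz65 sh by simp
  have r64: "p 6 c4 = p 3 c1" using RC[OF nz31] nz64 sh by simp
  have r54: "p 5 c4 = p 2 c1" using RC[OF nz21] nz54 sh by simp
  define P where "P = (\<lambda>x y. int (p x y))"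
  define s0 where "s0 = (0::int)"
  define s1 where "s1 = s0 + P 2 c1"
  define s2 where "s2 = s1 - P 3 c1"
  define s3 where "s3 = s2 + P 3 c2"
  define s4 where "s4 = s3 - P 5 c2"
  define s5 where "s5 = s4 + P 5 c5"
  define s6 where "s6 = s5 - P 6 c5"
  define s7 where "s7 = s6 + P 6 c4"
  define s8 where "s8 = s7 - P 5 c4"
  define s9 where "s9 = s8 + P 5 c2"
  have close: "s9 = s0 + P 2 c2"
    unfolding s9_def s8_def s7_def s6_def s5_def s4_def s3_def s2_def s1_def s0_def P_def
    using r55 r65 r64 r54 by simp
  have cd: "c1 \<noteq> c2" "c1 \<noteq> c4" "c1 \<noteq> c5" "c2 \<noteq> c4" "c2 \<noteq> c5" "c4 \<noteq> c5"
    using nb unfolding c1_def c2_def c4_def c5_def by auto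
  have ex: "\<exists>k \<le> 10. tanner_cycle nb dl L M p k"
  proof (cases "lab M s4 = lab M s8")
    case True
    define vs where "vs = [Chk 5 (lab M s4), Bit c5 (lab M s5), Chk 6 (lab M s6), Bit c4 (lab M s7)]"
    have e0: "tanner_adj nb dl L M p (Chk 5 (lab M s4)) (Bit c5 (lab M s5))"
      by (rule adj_fwd[OF M nz55]) (simp add: s5_def P_def)
    have e1: "tanner_adj nb dl L M p (Bit c5 (lab M s5)) (Chk 6 (lab M s6))"
      by (rule adj_bwd[OF M nz65]) (simp add: s6_def P_def)
    have e2: "tanner_adj nb dl L M p (Chk 6 (lab M s6)) (Bit c4 (lab M s7))"
      by (rule adj_fwd[OF M nz64]) (simp add: s7_def P_def)
    have e3: "tanner_adj nb dl L M p (Bit c4 (lab M s7)) (Chk 5 (lab M s8))"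
      by (rule adj_bwd[OF M nz54]) (simp add: s8_def P_def)
    have "tanner_cycle nb dl L M p 4"
      unfolding tanner_cycle_def
    proof (intro exI[of _ vs] conjI allI impI)
      show "length vs = 4" unfolding vs_def by simp
      show "distinct vs" unfolding vs_def using cd by simp
      fix i assume "i < (4::nat)"
      hence "i = 0 \<or> i = 1 \<or> i = 2 \<or> i = 3" by arith
      thus "tanner_adj nb dl L M p (vs ! i) (vs ! ((i + 1) mod 4))"
        unfolding vs_def using e0 e1 e2 e3 True by auto
    qed simp
    thus ?thesis by (intro exI[of _ 4]) simp
  next
    case False
    define vs where "vs = [Chk 2 (lab M s0), Bit c1 (lab M s1), Chk 3 (lab M s2), Bit c2 (lab M s3),
      Chk 5 (lab M s4), Bit c5 (lab M s5), Chk 6 (lab M s6), Bit c4 (lab M s7),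
      Chk 5 (lab M s8), Bit c2 (lab M s9)]"
    have n39: "lab M s3 \<noteq> lab M s9"
    proof
      assume "lab M s3 = lab M s9"
      hence "s3 mod int M = s9 mod int M" using lab_eq_iff[OF M] by blast
      hence "(s4 + P 5 c2) mod int M = (s8 + P 5 c2) mod int M"
        unfolding s4_def s9_def by simp
      moreover have "s4 mod int M = ((s4 + P 5 c2) mod int M - P 5 c2) mod int M"
        by (simp add: mod_diff_left_eq)
      moreover have "s8 mod int M = ((s8 + P 5 c2) mod int M - P 5 c2) mod int M"
        by (simp add: mod_diff_left_eq)
      ultimately have "s4 mod int M = s8 mod int M" by simp
      thus False using False lab_eq_iff[OF M] by blast
    qed
    have e0: "tanner_adj nb dl L M p (Chk 2 (lab M s0)) (Bit c1 (lab M s1))"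
      by (rule adj_fwd[OF M nz21]) (simp add: s1_def P_def)
    have e1: "tanner_adj nb dl L M p (Bit c1 (lab M s1)) (Chk 3 (lab M s2))"
      by (rule adj_bwd[OF M nz31]) (simp add: s2_def P_def)
    have e2: "tanner_adj nb dl L M p (Chk 3 (lab M s2)) (Bit c2 (lab M s3))"
      by (rule adj_fwd[OF M nz32]) (simp add: s3_def P_def)
    have e3: "tanner_adj nb dl L M p (Bit c2 (lab M s3)) (Chk 5 (lab M s4))"
      by (rule adj_bwd[OF M nz52]) (simp add: s4_def P_def)
    have e4: "tanner_adj nb dl L M p (Chk 5 (lab M s4)) (Bit c5 (lab M s5))"
      by (rule adj_fwd[OF M nz55]) (simp add: s5_def P_def)
    have e5: "tanner_adj nb dl L M p (Bit c5 (lab M s5)) (Chk 6 (lab M s6))"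
      by (rule adj_bwd[OF M nz65]) (simp add: s6_def P_def)
    have e6: "tanner_adj nb dl L M p (Chk 6 (lab M s6)) (Bit c4 (lab M s7))"
      by (rule adj_fwd[OF M nz64]) (simp add: s7_def P_def)
    have e7: "tanner_adj nb dl L M p (Bit c4 (lab M s7)) (Chk 5 (lab M s8))"
      by (rule adj_bwd[OF M nz54]) (simp add: s8_def P_def)
    have e8: "tanner_adj nb dl L M p (Chk 5 (lab M s8)) (Bit c2 (lab M s9))"
      by (rule adj_fwd[OF M nz52]) (simp add: s9_def P_def)
    have e9: "tanner_adj nb dl L M p (Bit c2 (lab M s9)) (Chk 2 (lab M s0))"
      by (rule adj_bwd[OF M nz22]) (simp add: close P_def)
    have "tanner_cycle nb dl L M p 10"
      unfolding tanner_cycle_def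
    proof (intro exI[of _ vs] conjI allI impI)
      show "length vs = 10" unfolding vs_def by simp
      show "distinct vs" unfolding vs_def using cd False n39 by auto
      fix i assume "i < (10::nat)"
      hence "i = 0 \<or> i = 1 \<or> i = 2 \<or> i = 3 \<or> i = 4 \<or> i = 5 \<or> i = 6 \<or> i = 7 \<or> i = 8 \<or> i = 9" by arith
      thus "tanner_adj nb dl L M p (vs ! i) (vs ! ((i + 1) mod 10))"
        unfolding vs_def using e0 e1 e2 e3 e4 e5 e6 e7 e8 e9 by auto
    qed simp
    thus ?thesis by (intro exI[of _ 10]) simp
  qed
  moreover have "tanner_girth nb dl L M p \<le> 10"
  proof -
    obtain k where k: "k \<le> 10" "tanner_cycle nb dl L M p k" using ex by blast
    have "tanner_girth nb dl L M p \<le> enat k"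
      unfolding tanner_girth_def using k(2) by (intro INF_lower) simp
    also have "enat k \<le> 10" using k(1) by (simp add: numeral_eq_enat)
    finally show ?thesis .
  qed
  ultimately show ?thesis by blast
qed

end
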